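(* Let $M,N$ be weights of $\mathbb{R}^m,\mathbb{R}^n$, let $A\in\mathbb{R}^{m\times n}$ with $MA=AN$, and let $K\subseteq\mathbb{R}^n$ be a closed cone. Then $$(A\circ I\circ K)^{[*]}\cap\mathcal{R}(A\circ I)\subseteq (A^{[\dagger]})^{[*]}\circ I\circ K^{[*]}.$$ If moreover $A^{[\dagger]}\circ A\circ K\subseteq K$, then equality holds.
   Context: A weight is a real symmetric matrix $W$ with $W^2=I$. $\mathbb{R}^m$ and $\mathbb{R}^n$ carry weights $M\in\mathbb{R}^{m\times m}$ and $N\in\mathbb{R}^{n\times n}$, respectively. The indefinite inner product on the space with weight $W$ is $[x,y]=\langle x,Wy\rangle$. Indefinite matrix product: if $B$ has $p$ columns and $C$ has $p$ rows (or is a vector in $\mathbb{R}^p$), $p\in\{m,n\}$, and $W$ is the weight of $\mathbb{R}^p$, then $B\circ C:=BWC$. $I$ denotes an identity matrix of the appropriate size. Indefinite adjoint of $B\in\mathbb{R}^{p\times q}$: $B^{[*]}:=W_qB^TW_p$, where $W_p,W_q$ are the weights of $\mathbb{R}^p,\mathbb{R}^q$. Indefinite Moore–Penrose inverse: $A^{[\dagger]}$ is the unique $X\in\mathbb{R}^{n\times m}$ such that - $A\circ X\circ A=A$, - $X\circ A\circ X=X$, - $(A\circ X)^{[*]}=A\circ X$, - $(X\circ A)^{[*]}=X\circ A$. It equals $NA^\dagger M$. Range and null space: for a matrix $B$ with $q$ columns, $\mathcal{R}(B)=\{B\circ x:x\in\mathbb{R}^q\}$ and $\mathcal{N}(B)=\{x\in\mathbb{R}^q:B\circ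 x=0\}$. A cone is a nonempty set closed under addition and under multiplication by nonnegative scalars. For $S$ a subset of $\mathbb{R}^p$ with weight $W$, the dual is $S^{[*]}=\{x\in\mathbb{R}^p:[x,t]\ge0\ \forall t\in S\}$. For a matrix $B$ and a set $S$, $B\circ S=\{B\circ s:s\in S\}$. *)

theory Defs
  imports "HOL-Analysis.Analysis"
begin

definition is_weight :: "real^'p^'p \<Rightarrow> bool" where
  "is_weight W \<longleftrightarrow> transpose W = W \<and> W ** W = mat 1"

definition iprod :: "real^'p^'p \<Rightarrow> real^'p^'a \<Rightarrow> real^'b^'p \<Rightarrow> real^'b^'a" where
  "iprod W B C = B ** W ** C"

definition iapp :: "real^'p^'p \<Rightarrow> real^'p^'a \<Rightarrow> real^'p \<Rightarrow> real^'a" where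
  "iapp W B x = B *v (W *v x)"

definition indef_adj :: "real^'p^'p \<Rightarrow> real^'q^'q \<Rightarrow> real^'q^'p \<Rightarrow> real^'p^'q" where
  "indef_adj Wp Wq B = Wq ** transpose B ** Wp"

definition indef_MP :: "real^'m^'m \<Rightarrow> real^'n^'n \<Rightarrow> real^'n^'m \<Rightarrow> real^'m^'n" where
  "indef_MP M N A = (THE X.
      iprod M (iprod N A X) A = A \<and>
      iprod N (iprod M X A) X = X \<and>
      indef_adj M M (iprod N A X) = iprod N A X \<and>
      indef_adj N N (iprod M X A) = iprod M X A)"

definition irange :: "real^'q^'q \<Rightarrow> real^'q^'p \<Rightarrow> (real^'p) set" where
  "irange Wq B = {iapp Wq B x | x. True}"

definition is_cone :: "('a::real_vector) set \<Rightarrow> bool" where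
  "is_cone S \<longleftrightarrow> S \<noteq> {} \<and> (\<forall>x\<in>S. \<forall>y\<in>S. x + y \<in> S) \<and> (\<forall>x\<in>S. \<forall>c::real. c \<ge> 0 \<longrightarrow> c *\<^sub>R x \<in> S)"

text \<open>Indefinite dual: S^[*] = {x. [x,t] = <x, W t> >= 0 for all t in S}.\<close>
definition idual :: "real^'p^'p \<Rightarrow> (real^'p) set \<Rightarrow> (real^'p) set" where
  "idual W S = {x. \<forall>t\<in>S. inner x (W *v t) \<ge> 0}"

end

theory Submission
  imports Defs
begin

declare transpose_matrix_vector[simp del] vector_transpose_matrix[simp del]

lemma proj_exists:
  fixes V :: "'a::euclidean_space set"
  assumes sV: "subspace V"
  shows "\<exists>p. linear p \<and> (\<forall>x. p x \<in> V) \<and> (\<forall>x\<in>V. p x = x) \<and> (\<forall>x w. w \<in> V \<longrightarrow> (x - p x) \<bullet> w = 0)"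
proof -
  have "\<exists>y. y \<in> V \<and> (\<forall>w\<in>V. (x - y) \<bullet> w = 0)" for x
  proof -
    obtain y z where "y \<in> span V" "\<And>w. w \<in> span V \<Longrightarrow> orthogonal z w" "x = y + z"
      by (rule orthogonal_subspace_decomp_exists[of V x]) blast
    then show ?thesis using sV span_eq_iff[of V]
      by (metis add_diff_cancel_left' orthogonal_def span_base)
  qed
  then obtain p where pV: "\<And>x. p x \<in> V" and po: "\<And>x w. w \<in> V \<Longrightarrow> (x - p x) \<bullet> w = 0"
    by metis
  have uniq: "a = b" if "a \<in> V" "b \<in> V" "\<forall>w\<in>V. (x - a) \<bullet> w = 0" "\<forall>w\<in>V. (x - b) \<bullet> w = 0" for x a b
  proof -
    have ab: "a - b \<in> V" using that sV by (simp add: subspace_diff)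
    have "(x - b) \<bullet> (a - b) - (x - a) \<bullet> (a - b) = 0" using that ab by simp
    then have "(a - b) \<bullet> (a - b) = 0" by (simp add: inner_diff_left inner_diff_right inner_commute)
    then show ?thesis by simp
  qed
  have add: "p (x + y) = p x + p y" for x y
  proof (rule uniq[of "p (x+y)" "p x + p y" "x + y"])
    show "p (x + y) \<in> V" by (rule pV)
    show "p x + p y \<in> V" using pV sV by (simp add: subspace_add)
    show "\<forall>w\<in>V. (x + y - p (x + y)) \<bullet> w = 0" using po by blast
    show "\<forall>w\<in>V. (x + y - (p x + p y)) \<bullet> w = 0"
    proof
      fix w assume w: "w \<in> V"
      have "x + y - (p x + p y) = (x - p x) + (y - p y)" by simp
      then show "(x + y - (p x + p y)) \<bullet> w = 0" by (simp only: inner_add_left po[OF w] add_0)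
    qed
  qed
  have sc: "p (c *\<^sub>R x) = c *\<^sub>R p x" for c x
  proof (rule uniq[of "p (c *\<^sub>R x)" "c *\<^sub>R p x" "c *\<^sub>R x"])
    show "p (c *\<^sub>R x) \<in> V" by (rule pV)
    show "c *\<^sub>R p x \<in> V" using pV sV by (simp add: subspace_scale)
    show "\<forall>w\<in>V. (c *\<^sub>R x - p (c *\<^sub>R x)) \<bullet> w = 0" using po by blast
    show "\<forall>w\<in>V. (c *\<^sub>R x - c *\<^sub>R p x) \<bullet> w = 0"
    proof
      fix w assume w: "w \<in> V"
      have "c *\<^sub>R x - c *\<^sub>R p x = c *\<^sub>R (x - p x)" by (simp add: scaleR_diff_right)
      then show "(c *\<^sub>R x - c *\<^sub>R p x) \<bullet> w = 0" by (simp only: inner_scaleR_left po[OF w] mult_zero_right)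
    qed
  qed
  have "linear p" by (rule linearI) (use add sc in auto)
  moreover have "\<forall>x\<in>V. p x = x"
  proof
    fix x assume "x \<in> V"
    show "p x = x"
      by (rule uniq[of "p x" x x]) (use pV po \<open>x \<in> V\<close> in auto)
  qed
  ultimately show ?thesis using pV po by blast
qed

lemma dot_transp: "inner (transpose B *v x) y = inner x (B *v (y::real^_))"
  by (simp add: dot_lmul_matrix transpose_matrix_vector)

lemma sym_from_fun:
  fixes B :: "real^'n^'n"
  assumes "\<And>x y. (B *v x) \<bullet> y = x \<bullet> (B *v y)"
  shows "transpose B = B"
proof -
  have "transpose B *v x = B *v x" for x
  proof -
    have "(transpose B *v x - B *v x) \<bullet> y = 0" for y
      using assms[of x y] by (simp add: inner_diff_left dot_transp)
    from this[of "transpose B *v x - B *v x"] show ?thesis by simp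
  qed
  then show ?thesis by (simp add: matrix_eq)
qed

lemma matrix_works_real: "linear (f::real^'n \<Rightarrow> real^'m) \<Longrightarrow> matrix f *v x = f x"
  using matrix_works[of f] by (simp add: linear_def scalar_mult_eq_scaleR)

lemma mp_exists:
  fixes A :: "real^'n^'m"
  shows "\<exists>Y::real^'m^'n. A ** Y ** A = A \<and> Y ** A ** Y = Y \<and> transpose (A ** Y) = A ** Y \<and> transpose (Y ** A) = Y ** A"
proof -
  define RA where "RA = range (\<lambda>x. A *v x)"
  define S where "S = range (\<lambda>y. transpose A *v y)"
  have sRA: "subspace RA" unfolding RA_def by (simp add: linear_subspace_image)
  have sS: "subspace S" unfolding S_def by (simp add: linear_subspace_image)
  obtain p where lp: "linear p" and pV: "\<And>x. p x \<in> RA" and pid: "\<And>x. x \<in> RA \<Longrightarrow> p x = x"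
    and po: "\<And>x w. w \<in> RA \<Longrightarrow> (x - p x) \<bullet> w = 0"
    using proj_exists[OF sRA] by blast
  obtain q where lq: "linear q" and qV: "\<And>x. q x \<in> S" and qid: "\<And>x. x \<in> S \<Longrightarrow> q x = x"
    and qo: "\<And>x w. w \<in> S \<Longrightarrow> (x - q x) \<bullet> w = 0"
    using proj_exists[OF sS] by blast
  have kerA: "A *v (x - q x) = 0" for x
  proof -
    have "(A *v (x - q x)) \<bullet> u = 0" for u
      using qo[of "transpose A *v u" x] by (simp add: S_def dot_transp inner_commute)
    from this[of "A *v (x - q x)"] show ?thesis by simp
  qed
  have Aq: "A *v q x = A *v x" for x using kerA[of x] by (simp add: matrix_vector_mult_diff_distrib)
  have inj: "inj_on (\<lambda>x. A *v x) (span S)"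
  proof (rule inj_onI)
    fix x y assume "x \<in> span S" "y \<in> span S" "A *v x = A *v y"
    then have "x \<in> S" "y \<in> S" using sS span_eq_iff by blast+
    then have "x = q x" "y = q y" using qid by auto
    moreover have "q x = q y"
    proof -
      have "x - y \<in> S" using \<open>x \<in> S\<close> \<open>y \<in> S\<close> sS subspace_diff by blast
      then obtain u where u: "x - y = transpose A *v u" unfolding S_def by blast
      have "A *v (x - y) = 0" using \<open>A *v x = A *v y\<close> by (simp add: matrix_vector_mult_diff_distrib)
      then have "(x - y) \<bullet> (x - y) = 0" using u dot_transp[of A u "x - y"] by simp
      then show ?thesis using \<open>x = q x\<close> \<open>y = q y\<close> by simp
    qed
    ultimately show "x = y" by simp
  qed
  obtain g where gr: "range g \<subseteq> span S" and lg: "linear g" and gA: "\<And>x. x \<in> span S \<Longrightarrow> g (A *v x) = x"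
    using linear_inj_on_left_inverse[OF matrix_vector_mul_linear inj] by blast
  have gS: "g y \<in> S" for y using gr sS span_eq_iff by blast
  define h where "h = g \<circ> p"
  have lh: "linear h" unfolding h_def using lg lp by (simp add: linear_compose)
  have gAq: "g (A *v x) = q x" for x
    using gA[of "q x"] qV[of x] Aq[of x] by (simp add: span_base)
  have Ah: "A *v h y = p y" for y
  proof -
    obtain x where "p y = A *v x" using pV[of y] unfolding RA_def by blast
    then show ?thesis unfolding h_def using gAq Aq by simp
  qed
  have hA: "h (A *v x) = q x" for x
    using pid[of "A *v x"] gAq unfolding h_def RA_def by simp
  have qh: "q (h y) = h y" for y unfolding h_def using qid gS by simp
  have psym: "(p x) \<bullet> y = x \<bullet> (p y)" for x y
  proof -
    have "(x - p x) \<bullet> p y = 0" "(y - p y) \<bullet> p x = 0" using po pV by auto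
    then have "x \<bullet> p y = p x \<bullet> p y" "y \<bullet> p x = p y \<bullet> p x" by (simp_all add: inner_diff_left)
    then show ?thesis by (metis inner_commute)
  qed
  have qsym: "(q x) \<bullet> y = x \<bullet> (q y)" for x y
  proof -
    have "(x - q x) \<bullet> q y = 0" "(y - q y) \<bullet> q x = 0" using qo qV by auto
    then have "x \<bullet> q y = q x \<bullet> q y" "y \<bullet> q x = q y \<bullet> q x" by (simp_all add: inner_diff_left)
    then show ?thesis by (metis inner_commute)
  qed
  define Y where "Y = matrix h"
  have Yv: "Y *v y = h y" for y unfolding Y_def using matrix_works_real[OF lh] .
  have e1: "A ** Y ** A = A"
    by (simp add: matrix_eq flip: matrix_vector_mul_assoc) (simp add: Yv hA Aq)
  have e2: "Y ** A ** Y = Y"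
    by (simp add: matrix_eq flip: matrix_vector_mul_assoc) (simp add: Yv hA qh)
  have e3: "transpose (A ** Y) = A ** Y"
    by (rule sym_from_fun) (simp add: Yv Ah psym flip: matrix_vector_mul_assoc)
  have e4: "transpose (Y ** A) = Y ** A"
    by (rule sym_from_fun) (simp add: Yv hA qsym flip: matrix_vector_mul_assoc)
  show ?thesis using e1 e2 e3 e4 by blast
qed

definition stdMP :: "real^'n^'m \<Rightarrow> real^'m^'n \<Rightarrow> bool" where
  "stdMP A Y \<longleftrightarrow> A ** Y ** A = A \<and> Y ** A ** Y = Y \<and> transpose (A ** Y) = A ** Y \<and> transpose (Y ** A) = Y ** A"

lemma mp_unique:
  assumes "stdMP A Y1" "stdMP A Y2"
  shows "Y1 = Y2"
proof -
  have a1: "A ** Y1 ** A = A" "Y1 ** A ** Y1 = Y1" "transpose (A ** Y1) = A ** Y1" "transpose (Y1 ** A) = Y1 ** A"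
    using assms(1) by (auto simp: stdMP_def)
  have a2: "A ** Y2 ** A = A" "Y2 ** A ** Y2 = Y2" "transpose (A ** Y2) = A ** Y2" "transpose (Y2 ** A) = Y2 ** A"
    using assms(2) by (auto simp: stdMP_def)
  have t1: "transpose A = transpose A ** A ** Y2"
  proof -
    have "transpose A = transpose (A ** Y2 ** A)" using a2 by simp
    also have "\<dots> = transpose A ** transpose (A ** Y2)" by (simp add: matrix_transpose_mul)
    also have "\<dots> = transpose A ** A ** Y2" using a2 by (simp add: matrix_mul_assoc)
    finally show ?thesis .
  qed
  have t2: "transpose A = Y1 ** A ** transpose A"
  proof -
    have "transpose A = transpose (A ** Y1 ** A)" using a1 by simp
    also have "\<dots> = transpose (Y1 ** A) ** transpose A" by (simp add: matrix_transpose_mul matrix_mul_assoc)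
    also have "\<dots> = Y1 ** A ** transpose A" using a1 by simp
    finally show ?thesis .
  qed
  have "Y1 = Y1 ** transpose (A ** Y1)" using a1 by (simp add: matrix_mul_assoc)
  also have "\<dots> = Y1 ** transpose Y1 ** transpose A" by (simp add: matrix_transpose_mul matrix_mul_assoc)
  also have "\<dots> = Y1 ** transpose Y1 ** (transpose A ** A ** Y2)" using t1 by simp
  also have "\<dots> = Y1 ** (transpose (A ** Y1)) ** A ** Y2" by (simp add: matrix_transpose_mul matrix_mul_assoc)
  also have "\<dots> = Y1 ** A ** Y2" using a1 by (simp add: matrix_mul_assoc)
  finally have y1: "Y1 = Y1 ** A ** Y2" .
  have "Y2 = transpose (Y2 ** A) ** Y2" using a2 by simp
  also have "\<dots> = transpose A ** transpose Y2 ** Y2" by (simp add: matrix_transpose_mul)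
  also have "\<dots> = (Y1 ** A ** transpose A) ** transpose Y2 ** Y2" using t2 by simp
  also have "\<dots> = Y1 ** A ** transpose (Y2 ** A) ** Y2" by (simp add: matrix_transpose_mul matrix_mul_assoc)
  also have "\<dots> = Y1 ** A ** Y2" using a2 by (metis matrix_mul_assoc)
  finally show ?thesis using y1 by simp
qed

lemma indef_iff:
  fixes M :: "real^'m^'m" and N :: "real^'n^'n" and A :: "real^'n^'m" and Y :: "real^'m^'n"
  assumes M: "is_weight M" and N: "is_weight N"
  shows "(iprod M (iprod N A (N**Y**M)) A = A \<and>
      iprod N (iprod M (N**Y**M) A) (N**Y**M) = (N**Y**M) \<and>
      indef_adj M M (iprod N A (N**Y**M)) = iprod N A (N**Y**M) \<and>
      indef_adj N N (iprod M (N**Y**M) A) = iprod M (N**Y**M) A) \<longleftrightarrow> stdMP A Y"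
proof -
  have MM: "M ** M = mat 1" "transpose M = M" and NN: "N ** N = mat 1" "transpose N = N"
    using M N by (auto simp: is_weight_def)
  have MM': "B ** M ** M = B" for B :: "real^'m^'k" using MM by (metis matrix_mul_assoc matrix_mul_rid)
  have NN': "B ** N ** N = B" for B :: "real^'n^'k" using NN by (metis matrix_mul_assoc matrix_mul_rid)
  have canc: "(N ** B ** M = N ** C ** M) \<longleftrightarrow> B = C" for B C :: "real^'m^'n"
    by (metis MM(1) NN(1) matrix_mul_assoc matrix_mul_lid matrix_mul_rid)
  have cancM: "(B ** M = C ** M) \<longleftrightarrow> B = C" for B C :: "real^'m^'m"
    by (metis MM' )
  have cancN: "(N ** B = N ** C) \<longleftrightarrow> B = C" for B C :: "real^'n^'n"
    by (metis NN(1) matrix_mul_assoc matrix_mul_lid)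
  have e1: "iprod M (A ** Y ** M) A = A ** Y ** A"
    by (simp add: iprod_def matrix_mul_assoc MM' NN')
  have e2: "iprod N (N ** (Y ** A)) (N**Y**M) = N ** (Y ** A ** Y) ** M"
    by (simp add: iprod_def matrix_mul_assoc MM' NN')
  have e3a: "indef_adj M M (A ** Y ** M) = transpose (A ** Y) ** M"
    by (simp add: iprod_def indef_adj_def matrix_transpose_mul matrix_mul_assoc MM MM' NN')
  have e3b: "iprod N A (N**Y**M) = A ** Y ** M"
    by (simp add: iprod_def matrix_mul_assoc NN')
  have e4a: "indef_adj N N (N ** (Y ** A)) = N ** transpose (Y ** A)"
    by (simp add: iprod_def indef_adj_def matrix_transpose_mul matrix_mul_assoc MM MM' NN NN')
  have e4b: "iprod M (N**Y**M) A = N ** (Y ** A)"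
    by (simp add: iprod_def matrix_mul_assoc MM')
  have "N ** (Y ** A ** Y) ** M = N ** Y ** M \<longleftrightarrow> Y ** A ** Y = Y" by (rule canc)
  moreover have "transpose (A ** Y) ** M = A ** Y ** M \<longleftrightarrow> transpose (A ** Y) = A ** Y" by (rule cancM)
  moreover have "N ** transpose (Y ** A) = N ** (Y ** A) \<longleftrightarrow> transpose (Y ** A) = Y ** A" by (rule cancN)
  ultimately show ?thesis
    unfolding e3b e4b e1 e2 e3a e4a stdMP_def by blast
qed

lemma indef_MP_eq:
  fixes M :: "real^'m^'m" and N :: "real^'n^'n" and A :: "real^'n^'m"
  assumes M: "is_weight M" and N: "is_weight N" and Y: "stdMP A Y"
  shows "indef_MP M N A = N ** Y ** M"
proof -
  have MM: "M ** M = mat 1" and NN: "N ** N = mat 1"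
    using M N by (auto simp: is_weight_def)
  show ?thesis unfolding indef_MP_def
  proof (rule the_equality)
    show "iprod M (iprod N A (N**Y**M)) A = A \<and>
      iprod N (iprod M (N**Y**M) A) (N**Y**M) = (N**Y**M) \<and>
      indef_adj M M (iprod N A (N**Y**M)) = iprod N A (N**Y**M) \<and>
      indef_adj N N (iprod M (N**Y**M) A) = iprod M (N**Y**M) A"
      using indef_iff[OF M N, of A Y] Y by blast
  next
    fix X assume H: "iprod M (iprod N A X) A = A \<and>
      iprod N (iprod M X A) X = X \<and>
      indef_adj M M (iprod N A X) = iprod N A X \<and>
      indef_adj N N (iprod M X A) = iprod M X A"
    have XX: "N ** (N ** X ** M) ** M = X"
      by (metis MM NN matrix_mul_assoc matrix_mul_lid matrix_mul_rid)
    have "stdMP A (N ** X ** M)"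
      using indef_iff[OF M N, of A "N ** X ** M"] H unfolding XX by blast
    then have "N ** X ** M = Y" using mp_unique Y by blast
    then show "X = N ** Y ** M" using XX by simp
  qed
qed

theorem lemma3p8:
  fixes M :: "real^'m^'m" and N :: "real^'n^'n" and A :: "real^'n^'m"
    and K :: "(real^'n) set"
  assumes "is_weight M" and "is_weight N" and "M ** A = A ** N"
    and "is_cone K" and "closed K"
  shows "(idual M ((iapp N (iprod N A (mat 1))) ` K) \<inter> irange N (iprod N A (mat 1))
           \<subseteq> (iapp N (iprod N (indef_adj N M (indef_MP M N A)) (mat 1))) ` (idual N K))
       \<and> ((iapp N (iprod M (indef_MP M N A) A)) ` K \<subseteq> K \<longrightarrow>
         idual M ((iapp N (iprod N A (mat 1))) ` K) \<inter> irange N (iprod N A (mat 1))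
           = (iapp N (iprod N (indef_adj N M (indef_MP M N A)) (mat 1))) ` (idual N K))"
proof -
  note M = assms(1) and N = assms(2) and MA = assms(3)
  have MM: "M ** M = mat 1" "transpose M = M" and NN: "N ** N = mat 1" "transpose N = N"
    using M N by (auto simp: is_weight_def)
  have MM': "B ** M ** M = B" for B :: "real^'m^'k" using MM by (metis matrix_mul_assoc matrix_mul_rid)
  have NN': "B ** N ** N = B" for B :: "real^'n^'k" using NN by (metis matrix_mul_assoc matrix_mul_rid)
  obtain Y where Y: "stdMP A Y" using mp_exists[of A] unfolding stdMP_def by blast
  have Y1: "A ** Y ** A = A" and Y2: "Y ** A ** Y = Y" and Y3: "transpose (A ** Y) = A ** Y"
    and Y4: "transpose (Y ** A) = Y ** A" using Y by (auto simp: stdMP_def)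
  have X: "indef_MP M N A = N ** Y ** M" using indef_MP_eq[OF M N Y] .
  have Nv: "N *v (N *v v) = v" for v by (simp add: matrix_vector_mul_assoc NN)
  have Msym: "inner (M *v u) v = inner u (M *v v)" for u v
    using dot_transp[of M u v] MM by simp
  have Nsym: "inner (N *v u) v = inner u (N *v v)" for u v
    using dot_transp[of N u v] NN by simp
  have f1: "iapp N (iprod N A (mat 1)) = (\<lambda>k. A *v k)"
    by (rule ext) (simp add: iapp_def iprod_def matrix_vector_mul_assoc[symmetric] Nv)
  have adjX: "indef_adj N M (indef_MP M N A) = transpose Y"
    unfolding X indef_adj_def
    by (simp add: matrix_transpose_mul matrix_mul_assoc MM NN MM' NN')
  have f2: "iapp N (iprod N (indef_adj N M (indef_MP M N A)) (mat 1)) = (\<lambda>z. transpose Y *v z)"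
    by (rule ext) (simp add: adjX iapp_def iprod_def matrix_vector_mul_assoc[symmetric] Nv)
  have f3: "iapp N (iprod M (indef_MP M N A) A) k = N *v (Y *v (A *v (N *v k)))" for k
    by (simp add: X iapp_def iprod_def matrix_vector_mul_assoc matrix_mul_assoc MM MM')
  have rng: "irange N (iprod N A (mat 1)) = range (\<lambda>x. A *v x)"
    unfolding irange_def f1 by auto
  have h1: "transpose A ** M = N ** transpose A"
    by (metis MA MM(2) NN(2) matrix_transpose_mul)
  have h2: "transpose Y ** transpose A = A ** Y"
    using Y3 by (simp add: matrix_transpose_mul)
  have h3: "transpose Y = A ** Y ** transpose Y"
  proof -
    have "transpose Y = transpose (Y ** A ** Y)" using Y2 by simp
    also have "\<dots> = transpose Y ** transpose A ** transpose Y" by (simp add: matrix_transpose_mul matrix_mul_assoc)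
    also have "\<dots> = A ** Y ** transpose Y" using h2 by simp
    finally show ?thesis .
  qed
  have sub: "idual M ((\<lambda>k. A *v k) ` K) \<inter> range (\<lambda>x. A *v x) \<subseteq> (\<lambda>z. transpose Y *v z) ` idual N K"
  proof
    fix y assume "y \<in> idual M ((\<lambda>k. A *v k) ` K) \<inter> range (\<lambda>x. A *v x)"
    then obtain x where yd: "\<And>k. k \<in> K \<Longrightarrow> inner y (M *v (A *v k)) \<ge> 0" and yx: "y = A *v x"
      unfolding idual_def by auto
    define z where "z = N *v (transpose A *v (M *v y))"
    have "inner z (N *v k) = inner y (M *v (A *v k))" for k
    proof -
      have "inner z (N *v k) = inner (transpose A *v (M *v y)) k"
        unfolding z_def by (simp add: Nsym Nv)
      also have "\<dots> = inner (M *v y) (A *v k)" by (simp add: dot_transp)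
      also have "\<dots> = inner y (M *v (A *v k))" by (simp add: Msym)
      finally show ?thesis .
    qed
    then have zK: "z \<in> idual N K" using yd unfolding idual_def by simp
    have "transpose Y *v z = y"
    proof -
      have "transpose Y *v z = (transpose Y ** (N ** (transpose A ** M))) *v y"
        unfolding z_def by (simp add: matrix_vector_mul_assoc)
      also have "transpose Y ** (N ** (transpose A ** M)) = A ** Y"
        by (simp add: h1 matrix_mul_assoc NN h2)
      also have "(A ** Y) *v y = y"
        unfolding yx by (simp add: matrix_vector_mul_assoc Y1)
      finally show ?thesis .
    qed
    then show "y \<in> (\<lambda>z. transpose Y *v z) ` idual N K" using zK by force
  qed
  have sup: "(\<lambda>z. transpose Y *v z) ` idual N K \<subseteq> idual M ((\<lambda>k. A *v k) ` K) \<inter> range (\<lambda>x. A *v x)"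
    if cond: "\<And>k. k \<in> K \<Longrightarrow> N *v (Y *v (A *v (N *v k))) \<in> K"
  proof
    fix y assume "y \<in> (\<lambda>z. transpose Y *v z) ` idual N K"
    then obtain z where zd: "\<And>k. k \<in> K \<Longrightarrow> inner z (N *v k) \<ge> 0" and yz: "y = transpose Y *v z"
      unfolding idual_def by auto
    have "y = A *v (Y *v (transpose Y *v z))"
      unfolding yz by (subst h3) (simp add: matrix_vector_mul_assoc matrix_mul_assoc)
    then have r: "y \<in> range (\<lambda>x. A *v x)" by blast
    have "inner y (M *v (A *v k)) \<ge> 0" if k: "k \<in> K" for k
    proof -
      have "inner y (M *v (A *v k)) = inner z (Y *v (A *v (N *v k)))"
        unfolding yz by (simp add: dot_transp matrix_vector_mul_assoc MA)
      also have "\<dots> = inner z (N *v (N *v (Y *v (A *v (N *v k)))))" by (simp add: Nv)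
      also have "\<dots> \<ge> 0" using zd cond k by blast
      finally show ?thesis .
    qed
    then have "y \<in> idual M ((\<lambda>k. A *v k) ` K)" unfolding idual_def by auto
    then show "y \<in> idual M ((\<lambda>k. A *v k) ` K) \<inter> range (\<lambda>x. A *v x)" using r by blast
  qed
  show ?thesis
  proof (intro conjI impI)
    show "idual M (iapp N (iprod N A (mat 1)) ` K) \<inter> irange N (iprod N A (mat 1))
          \<subseteq> iapp N (iprod N (indef_adj N M (indef_MP M N A)) (mat 1)) ` idual N K"
      unfolding f1 f2 rng by (rule sub)
  next
    assume c: "iapp N (iprod M (indef_MP M N A) A) ` K \<subseteq> K"
    have "\<And>k. k \<in> K \<Longrightarrow> N *v (Y *v (A *v (N *v k))) \<in> K"
      using c f3 by auto
    then show "idual M (iapp N (iprod N A (mat 1)) ` K) \<inter> irange N (iprod N A (mat 1))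
          = iapp N (iprod N (indef_adj N M (indef_MP M N A)) (mat 1)) ` idual N K"
      unfolding f1 f2 rng using sub sup by blast
  qed
qed

end
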